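(* Let $A$ be a commutative Noetherian ring and $I=\langle a_1,\dots,a_n\rangle\subset A$. Let $u\in A$ be such that its image in $A/I$ is a unit, and let $v\in A$ with $uv-1\in I$. Let $r$ be an even integer with $2\le r\le n$, let $B=A/\langle a_{r+1},\dots,a_n\rangle$, and write a bar for reduction modulo $\langle a_{r+1},\dots,a_n\rangle$. Assume the unimodular row $(\bar v,\bar a_2,-\bar a_1,\dots,\bar a_r,-\bar a_{r-1})$ can be completed to an invertible matrix over $B$. Then there exists $\alpha\in M_{n\times n}(A)$ such that (1) $\det(\alpha)-u\in I$, and (2) setting $(b_1,\dots,b_n)=(a_1,\dots,a_n)\alpha$, one has $I=\langle b_1,\dots,b_n\rangle$.
   Context: A row $(c_1,\dots,c_m)$ over $B$ is completable to an invertible matrix if it is the first row of a matrix in $\mathrm{GL}_m(B)$. *)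

theory Defs
  imports "HOL-Algebra.Ring_Divisibility" "Jordan_Normal_Form.Determinant"
begin

text \<open>The commutative ring structure of a type-class ring, viewed as a HOL-Algebra ring record,
  so that the library notions noetherian_ring and genideal can be applied.\<close>
definition class_ring :: "'a::comm_ring_1 ring" where
  "class_ring = \<lparr>carrier = UNIV, mult = (*), one = 1, zero = 0, add = (+)\<rparr>"

definition gen_ideal :: "'a::comm_ring_1 set \<Rightarrow> 'a set" where
  "gen_ideal S = genideal class_ring S"

text \<open>Square matrices over A (0-indexed, size m) whose images in A/J are inverse to each other:
  this says M is invertible over B = A/J (elements of B written via representatives in A).\<close>
definition invertible_mod :: "'a::comm_ring_1 set \<Rightarrow> nat \<Rightarrow> 'a mat \<Rightarrow> bool" where
  "invertible_mod J m M \<longleftrightarrow> M \<in> carrier_mat m m \<and>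
     (\<exists>N \<in> carrier_mat m m. \<forall>i<m. \<forall>j<m.
        (M * N) $$ (i,j) - (1\<^sub>m m) $$ (i,j) \<in> J \<and> (N * M) $$ (i,j) - (1\<^sub>m m) $$ (i,j) \<in> J)"

definition completable_mod :: "'a::comm_ring_1 set \<Rightarrow> nat \<Rightarrow> (nat \<Rightarrow> 'a) \<Rightarrow> bool" where
  "completable_mod J m c \<longleftrightarrow>
     (\<exists>M. invertible_mod J m M \<and> (\<forall>j<m. M $$ (0,j) - c j \<in> J))"

end

theory Submission
  imports Defs
begin

lemma class_ring_cring: "cring (class_ring :: 'a::comm_ring_1 ring)"
  unfolding class_ring_def
proof (rule cringI)
  show "abelian_group \<lparr>carrier = UNIV, mult = (*), one = (1::'a), zero = 0, add = (+)\<rparr>"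
    by (rule abelian_groupI) (auto intro: left_minus)
  show "Group.comm_monoid \<lparr>carrier = UNIV, mult = (*), one = (1::'a), zero = 0, add = (+)\<rparr>"
    by (rule comm_monoidI) (auto simp: mult.assoc mult.commute)
qed (auto simp: distrib_right)

lemma class_ring_inv: "a_inv (class_ring :: 'a::comm_ring_1 ring) x = - x"
proof -
  interpret cring "class_ring :: 'a ring" by (rule class_ring_cring)
  have "(-x) \<oplus>\<^bsub>class_ring\<^esub> x = \<zero>\<^bsub>class_ring\<^esub>" by (simp add: class_ring_def)
  thus ?thesis by (intro minus_equality) (auto simp: class_ring_def)
qed

definition tideal :: "'a::comm_ring_1 set \<Rightarrow> bool" where
  "tideal K \<longleftrightarrow> 0 \<in> K \<and> (\<forall>x\<in>K. \<forall>y\<in>K. x + y \<in> K) \<and> (\<forall>x\<in>K. \<forall>c. c * x \<in> K)"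

lemma tideal_ideal:
  assumes "tideal (K :: 'a::comm_ring_1 set)" shows "ideal K class_ring"
proof -
  interpret cring "class_ring :: 'a ring" by (rule class_ring_cring)
  have neg: "- x \<in> K" if "x \<in> K" for x
    using assms that unfolding tideal_def by (metis mult_minus1)
  show ?thesis
  proof (rule idealI)
    show "ring (class_ring :: 'a ring)" by (rule ring_axioms)
    show "subgroup K (add_monoid class_ring)"
      by (rule add.subgroupI) (use assms neg class_ring_inv[unfolded class_ring_def, of "_::'a"] in \<open>auto simp: tideal_def class_ring_def\<close>)
  qed (use assms in \<open>auto simp: tideal_def class_ring_def mult.commute\<close>)
qed

lemma ideal_tideal:
  assumes "ideal K (class_ring :: 'a::comm_ring_1 ring)" shows "tideal K"
proof -
  interpret ideal K "class_ring :: 'a ring" by fact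
  have "\<zero>\<^bsub>class_ring\<^esub> \<in> K" by (rule additive_subgroup.zero_closed[OF is_additive_subgroup])
  hence "0 \<in> K" by (simp add: class_ring_def)
  moreover have "x + y \<in> K" if "x \<in> K" "y \<in> K" for x y
    using additive_subgroup.a_closed[OF is_additive_subgroup that] by (simp add: class_ring_def)
  moreover have "c * x \<in> K" if "x \<in> K" for x c
    using I_l_closed[OF that, of c] by (simp add: class_ring_def)
  ultimately show ?thesis unfolding tideal_def by blast
qed

lemma tideal_gen: "tideal (gen_ideal (S :: 'a::comm_ring_1 set))"
proof -
  interpret cring "class_ring :: 'a ring" by (rule class_ring_cring)
  show ?thesis unfolding gen_ideal_def
    by (rule ideal_tideal, rule genideal_ideal) (auto simp: class_ring_def)
qed

lemma gen_self: "S \<subseteq> gen_ideal (S :: 'a::comm_ring_1 set)"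
  unfolding gen_ideal_def genideal_def by auto

lemma gen_min: "tideal K \<Longrightarrow> S \<subseteq> K \<Longrightarrow> gen_ideal (S :: 'a::comm_ring_1 set) \<subseteq> K"
  unfolding gen_ideal_def genideal_def using tideal_ideal by blast


lemma tideal_neg: "tideal K \<Longrightarrow> x \<in> K \<Longrightarrow> - x \<in> K"
  unfolding tideal_def by (metis mult_minus1)
lemma tideal_add: "tideal K \<Longrightarrow> x \<in> K \<Longrightarrow> y \<in> K \<Longrightarrow> x + y \<in> K"
  unfolding tideal_def by blast
lemma tideal_diff: "tideal K \<Longrightarrow> x \<in> K \<Longrightarrow> y \<in> K \<Longrightarrow> x - y \<in> K"
  using tideal_add[of K x "-y"] tideal_neg by fastforce
lemma tideal_multl: "tideal K \<Longrightarrow> x \<in> K \<Longrightarrow> c * x \<in> K"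
  unfolding tideal_def by blast
lemma tideal_multr: "tideal K \<Longrightarrow> x \<in> K \<Longrightarrow> x * c \<in> K"
  unfolding tideal_def by (metis mult.commute)
lemma tideal_zero: "tideal K \<Longrightarrow> 0 \<in> K"
  unfolding tideal_def by blast
lemma tideal_sum: "tideal K \<Longrightarrow> (\<And>i. i \<in> S \<Longrightarrow> f i \<in> K) \<Longrightarrow> sum f S \<in> K"
proof (induction S rule: infinite_finite_induct)
  case (infinite A) thus ?case by (simp add: tideal_zero)
next
  case empty thus ?case by (simp add: tideal_zero)
next
  case (insert x F) thus ?case by (simp add: tideal_add)
qed
lemma tideal_sum_diff: "tideal K \<Longrightarrow> (\<And>i. i \<in> S \<Longrightarrow> f i - g i \<in> K) \<Longrightarrow> sum f S - sum g S \<in> K"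
  using tideal_sum[of K S "\<lambda>i. f i - g i"] by (simp add: sum_subtractf)
lemma tideal_prod_diff: "tideal K \<Longrightarrow> (\<And>i. i \<in> S \<Longrightarrow> f i - g i \<in> K) \<Longrightarrow> prod f S - prod g S \<in> K"
proof (induction S rule: infinite_finite_induct)
  case (infinite A) thus ?case by (simp add: tideal_zero)
next
  case empty thus ?case by (simp add: tideal_zero)
next
  case (insert x F)
  have "prod f (insert x F) - prod g (insert x F) = f x * (prod f F - prod g F) + (f x - g x) * prod g F"
    using insert by (simp add: algebra_simps)
  also have "\<dots> \<in> K" using insert
    by (intro tideal_add tideal_multl tideal_multr) auto
  finally show ?case .
qed

lemma det_cong:
  assumes K: "tideal K" and A: "A \<in> carrier_mat m m" and B: "B \<in> carrier_mat m m"
    and c: "\<And>i j. i < m \<Longrightarrow> j < m \<Longrightarrow> A $$ (i,j) - B $$ (i,j) \<in> K"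
  shows "det A - det B \<in> K"
  unfolding det_def'[OF A] det_def'[OF B]
proof (rule tideal_sum_diff[OF K])
  fix p assume "p \<in> {p. p permutes {0..<m}}"
  hence p: "p permutes {0..<m}" by simp
  have "(\<Prod>i = 0..<m. A $$ (i, p i)) - (\<Prod>i = 0..<m. B $$ (i, p i)) \<in> K"
    by (rule tideal_prod_diff[OF K]) (use c permutes_in_image[OF p] in auto)
  hence "signof p * ((\<Prod>i = 0..<m. A $$ (i, p i)) - (\<Prod>i = 0..<m. B $$ (i, p i))) \<in> K"
    by (rule tideal_multl[OF K])
  thus "signof p * (\<Prod>i = 0..<m. A $$ (i, p i)) - signof p * (\<Prod>i = 0..<m. B $$ (i, p i)) \<in> K"
    by (simp add: algebra_simps)
qed

lemma det_last_id:
  assumes B: "B \<in> carrier_mat (Suc k) (Suc k)"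
    and row: "\<And>j. j < Suc k \<Longrightarrow> B $$ (k,j) = (if j = k then 1 else 0)"
  shows "det B = det (mat_delete B k k)"
proof -
  have "det B = (\<Sum>j<Suc k. B $$ (k,j) * cofactor B k j)"
    by (rule laplace_expansion_row[OF B]) simp
  also have "\<dots> = (\<Sum>j<Suc k. if j = k then cofactor B k j else 0)"
    by (rule sum.cong) (auto simp: row)
  also have "\<dots> = cofactor B k k" by simp
  also have "\<dots> = det (mat_delete B k k)" by (simp add: cofactor_def)
  finally show ?thesis .
qed

lemma det_first_row:
  assumes B: "B \<in> carrier_mat (Suc k) (Suc k)"
    and row: "\<And>j. j < Suc k \<Longrightarrow> B $$ (0,j) = (if j = 0 then v else 0)"
  shows "det B = v * det (mat_delete B 0 0)"
proof -
  have "det B = (\<Sum>j<Suc k. B $$ (0,j) * cofactor B 0 j)"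
    by (rule laplace_expansion_row[OF B]) simp
  also have "\<dots> = (\<Sum>j<Suc k. if j = 0 then v * cofactor B 0 j else 0)"
    by (rule sum.cong) (auto simp: row)
  also have "\<dots> = v * cofactor B 0 0" by simp
  also have "\<dots> = v * det (mat_delete B 0 0)" by (simp add: cofactor_def)
  finally show ?thesis .
qed

lemma parity_sum:
  fixes a :: "nat \<Rightarrow> 'a::comm_ring_1"
  shows "(\<Sum>k<2*p+1. (if k = 0 then v else if odd k then a (k+1) else - a (k-1)) * (if k = 0 then 0 else a k)) = 0"
proof (induction p)
  case 0 thus ?case by simp
next
  case (Suc p)
  have e: "2 * Suc p + 1 = Suc (Suc (2*p+1))" by simp
  show ?case unfolding e sum.lessThan_Suc using Suc by (simp add: algebra_simps)
qed


lemma det_block_id: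
  assumes A: "A \<in> carrier_mat r r"
  shows "det (mat (r+t) (r+t) (\<lambda>(i,j). if i < r \<and> j < r then A $$ (i,j) else if i = j then 1 else 0)) = det A"
proof (induction t)
  case 0
  have "mat (r+0) (r+0) (\<lambda>(i,j). if i < r \<and> j < r then A $$ (i,j) else if i = j then 1 else 0) = A"
    by (rule eq_matI) (use A in auto)
  thus ?case by simp
next
  case (Suc t)
  let ?B = "mat (r+Suc t) (r+Suc t) (\<lambda>(i,j). if i < r \<and> j < r then A $$ (i,j) else if i = j then (1::'a) else 0)"
  have "det ?B = det (mat_delete ?B (r+t) (r+t))"
    by (rule det_last_id) auto
  also have "mat_delete ?B (r+t) (r+t) = mat (r+t) (r+t) (\<lambda>(i,j). if i < r \<and> j < r then A $$ (i,j) else if i = j then 1 else 0)"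
    by (rule eq_matI) (auto simp: mat_delete_def)
  finally show ?case using Suc by simp
qed


lemma mult_mat_entry:
  assumes "A \<in> carrier_mat m m" "B \<in> carrier_mat m m" "i < m" "j < m"
  shows "(A * B) $$ (i,j) = (\<Sum>k<m. A $$ (i,k) * B $$ (k,j))"
  using assms by (simp add: scalar_prod_def atLeast0LessThan)

theorem proposition7p4:
  fixes a :: "nat \<Rightarrow> 'A::comm_ring_1" and n r :: nat and u v :: 'A
  assumes noeth: "noetherian_ring (class_ring :: 'A ring)"
    and I_def: "I = gen_ideal (a ` {1..n})"
    and u_unit: "\<exists>w. u * w - 1 \<in> I"
    and uv: "u * v - 1 \<in> I"
    and r_even: "even r" and r_ge: "2 \<le> r" and r_le: "r \<le> n"
    and J_def: "J = gen_ideal (a ` {r+1..n})"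
    and compl: "completable_mod J (r+1)
                  (\<lambda>k. if k = 0 then v else if odd k then a (k+1) else - a (k-1))"
  shows "\<exists>\<alpha> \<in> carrier_mat n n. det \<alpha> - u \<in> I \<and>
           I = gen_ideal ((\<lambda>j. \<Sum>i\<in>{1..n}. a i * \<alpha> $$ (i-1, j-1)) ` {1..n})"
proof -
  define m where "m = r+1"
  define c where "c = (\<lambda>k. if k = 0 then v else if odd k then a (k+1) else - a (k-1))"
  define xx where "xx = (\<lambda>k. if k = 0 then 0 else a k)"
  from compl obtain M where invM: "invertible_mod J m M" and rowM: "\<forall>j<m. M $$ (0,j) - c j \<in> J"
    unfolding completable_mod_def m_def c_def by blast
  from invM obtain N where M: "M \<in> carrier_mat m m" and N: "N \<in> carrier_mat m m"
    and MN: "\<forall>i<m. \<forall>j<m. (M*N)$$(i,j) - (1\<^sub>m m) $$(i,j) \<in> J \<and> (N*M)$$(i,j) - (1\<^sub>m m) $$(i,j) \<in> J"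
    unfolding invertible_mod_def by blast
  have tI: "tideal I" and tJ: "tideal J" using tideal_gen I_def J_def by auto
  have aI: "a i \<in> I" if "i \<in> {1..n}" for i using gen_self I_def that by blast
  have JI: "J \<subseteq> I" unfolding J_def by (rule gen_min[OF tI]) (use aI r_ge in auto)
  define e where "e = det M"
  define f where "f = det N"
  have efJ: "e*f - 1 \<in> J"
  proof -
    have "det (M*N) - det (1\<^sub>m m) \<in> J"
      by (rule det_cong[OF tJ]) (use M N MN in auto)
    thus ?thesis using det_mult[OF M N] det_one unfolding e_def f_def by simp
  qed
  define M2 where "M2 = mat r r (\<lambda>(i,j). M $$ (i+1, j+1))"
  define Mt where "Mt = mat m m (\<lambda>(i,j). if i = 0 then (if j = 0 then v else 0) else M $$ (i,j))"
  have detMt: "det Mt = v * det M2"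
  proof -
    have "det Mt = v * det (mat_delete Mt 0 0)"
      by (rule det_first_row) (auto simp: Mt_def m_def)
    also have "mat_delete Mt 0 0 = M2"
      by (rule eq_matI) (auto simp: mat_delete_def Mt_def M2_def m_def)
    finally show ?thesis .
  qed
  have cI: "c j \<in> I" if "1 \<le> j" "j < m" for j
  proof (cases "odd j")
    case True
    hence "j \<noteq> r" using r_even by auto
    hence "j + 1 \<in> {1..n}" using that r_le unfolding m_def by auto
    thus ?thesis using True aI unfolding c_def by auto
  next
    case False
    hence "j \<ge> 2" using that by presburger
    hence "j - 1 \<in> {1..n}" using that r_le unfolding m_def by auto
    thus ?thesis using False aI tideal_neg[OF tI] that unfolding c_def by auto
  qed
  have eMt: "e - det Mt \<in> I"
    unfolding e_def
  proof (rule det_cong[OF tI M])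
    show "Mt \<in> carrier_mat m m" by (simp add: Mt_def)
    fix i j assume ij: "i < m" "j < m"
    show "M $$ (i, j) - Mt $$ (i, j) \<in> I"
    proof (cases "i = 0")
      case True
      have "M $$ (0,j) - c j \<in> I" using rowM ij JI by auto
      moreover have "c j - Mt $$ (0,j) \<in> I"
      proof (cases "j = 0")
        case True thus ?thesis using ij tideal_zero[OF tI] by (simp add: Mt_def c_def)
      next
        case False thus ?thesis using ij cI[of j] by (simp add: Mt_def)
      qed
      ultimately have "(M $$ (0,j) - c j) + (c j - Mt $$ (0,j)) \<in> I" by (rule tideal_add[OF tI])
      thus ?thesis using True by simp
    next
      case False thus ?thesis using ij tideal_zero[OF tI] by (simp add: Mt_def)
    qed
  qed
  define s where "s = (\<lambda>j::nat. if j = 0 then f else 1)"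
  define A' where "A' = mat r r (\<lambda>(i,j). s j * M $$ (j+1, i+1))"
  have M2c: "M2 \<in> carrier_mat r r" by (simp add: M2_def)
  have detA': "det A' = f * det M2"
  proof -
    have "A' = transpose_mat (multrow 0 f M2)"
      by (rule eq_matI) (auto simp: A'_def M2_def mat_multrow_gen_def s_def)
    hence "det A' = det (multrow 0 f M2)"
      using det_transpose[of "multrow 0 f M2" r] by (simp add: mat_multrow_gen_def M2_def)
    also have "\<dots> = f * det M2" by (rule det_multrow) (use r_ge M2c in auto)
    finally show ?thesis .
  qed
  define \<alpha> where "\<alpha> = mat n n (\<lambda>(i,j). if i < r \<and> j < r then A' $$ (i,j) else if i = j then 1 else 0)"
  have \<alpha>c: "\<alpha> \<in> carrier_mat n n" by (simp add: \<alpha>_def)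
  have det\<alpha>: "det \<alpha> = det A'"
  proof -
    have "n = r + (n - r)" using r_le by simp
    hence "\<alpha> = mat (r + (n-r)) (r + (n-r)) (\<lambda>(i,j). if i < r \<and> j < r then A' $$ (i,j) else if i = j then 1 else 0)"
      unfolding \<alpha>_def by simp
    thus ?thesis using det_block_id[of A' r "n-r"] by (simp add: A'_def)
  qed
  have detu: "det \<alpha> - u \<in> I"
  proof -
    define d where "d = det M2"
    have h1: "e - v*d \<in> I" using eMt detMt d_def by simp
    have h2: "e*f - 1 \<in> I" using efJ JI by auto
    have "det \<alpha> - u = -(f*d)*(u*v-1) - u*f*(e - v*d) + u*(e*f-1)"
      using det\<alpha> detA' d_def by (simp add: algebra_simps)
    also have "\<dots> \<in> I"
      by (intro tideal_add[OF tI] tideal_diff[OF tI] tideal_multl[OF tI] uv h1 h2)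
    finally show ?thesis .
  qed
  define y where "y = (\<lambda>k. \<Sum>j<m. M $$ (k,j) * xx j)"
  define b where "b = (\<lambda>j. \<Sum>i\<in>{1..n}. a i * \<alpha> $$ (i-1, j-1))"
  have b_low: "b j = s (j-1) * y j" if j: "j \<in> {1..r}" for j
  proof -
    have "b j = (\<Sum>i\<in>{1..r}. a i * \<alpha> $$ (i-1, j-1))"
      unfolding b_def
      by (rule sum.mono_neutral_right) (use j r_le in \<open>auto simp: \<alpha>_def\<close>)
    also have "\<dots> = (\<Sum>i\<in>{1..r}. s (j-1) * (M $$ (j,i) * a i))"
      by (rule sum.cong) (use j r_le in \<open>auto simp: \<alpha>_def A'_def\<close>)
    also have "\<dots> = s (j-1) * (\<Sum>i\<in>{1..r}. M $$ (j,i) * a i)"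
      by (simp add: sum_distrib_left)
    also have "(\<Sum>i\<in>{1..r}. M $$ (j,i) * a i) = y j"
    proof -
      have "{..<m} = insert 0 {1..r}" unfolding m_def by auto
      hence "y j = M $$ (j,0) * xx 0 + (\<Sum>i\<in>{1..r}. M $$ (j,i) * xx i)"
        unfolding y_def by simp
      also have "\<dots> = (\<Sum>i\<in>{1..r}. M $$ (j,i) * a i)"
        by (simp add: xx_def)
      finally show ?thesis by simp
    qed
    finally show ?thesis .
  qed
  have b_high: "b j = a j" if j: "j \<in> {r+1..n}" for j
  proof -
    have "b j = (\<Sum>i\<in>{1..n}. if i = j then a j else 0)"
      unfolding b_def
      by (rule sum.cong) (use j in \<open>auto simp: \<alpha>_def\<close>)
    also have "\<dots> = a j" using j by simp
    finally show ?thesis .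
  qed
  define K where "K = gen_ideal (b ` {1..n})"
  have tK: "tideal K" unfolding K_def by (rule tideal_gen)
  have bK: "b j \<in> K" if "j \<in> {1..n}" for j using gen_self that unfolding K_def by blast
  have aK_high: "a j \<in> K" if "j \<in> {r+1..n}" for j
    using bK[of j] b_high[OF that] that r_ge by auto
  have JK: "J \<subseteq> K" unfolding J_def by (rule gen_min[OF tK]) (use aK_high in auto)
  have y0: "y 0 \<in> J"
  proof -
    obtain p where p: "r = 2*p" using r_even by blast
    have z: "(\<Sum>j<m. c j * xx j) = 0"
      unfolding m_def p c_def xx_def by (rule parity_sum)
    have "y 0 = (\<Sum>j<m. (M $$ (0,j) - c j) * xx j) + (\<Sum>j<m. c j * xx j)"
      unfolding y_def by (simp add: algebra_simps sum.distrib[symmetric])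
    also have "\<dots> = (\<Sum>j<m. (M $$ (0,j) - c j) * xx j)" using z by simp
    also have "\<dots> \<in> J"
      by (rule tideal_sum[OF tJ], rule tideal_multr[OF tJ]) (use rowM in auto)
    finally show ?thesis .
  qed
  have yK: "y k \<in> K" if k: "k < m" for k
  proof -
    consider "k = 0" | "k = 1" | "2 \<le> k" by linarith
    thus ?thesis
    proof cases
      case 1 thus ?thesis using y0 JK by auto
    next
      case 2
      have "b 1 = f * y 1" using b_low[of 1] r_ge by (simp add: s_def)
      hence fy: "f * y 1 \<in> K" using bK[of 1] r_ge r_le by auto
      have "y 1 = e * (f * y 1) - (e*f - 1) * y 1" by (simp add: algebra_simps)
      also have "\<dots> \<in> K"
      proof (rule tideal_diff[OF tK])
        show "e * (f * y 1) \<in> K" by (rule tideal_multl[OF tK fy])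
        show "(e*f - 1) * y 1 \<in> K" using efJ JK by (intro tideal_multr[OF tK]) auto
      qed
      finally show ?thesis using 2 by simp
    next
      case 3
      hence "b k = y k" using b_low[of k] k unfolding m_def by (simp add: s_def)
      thus ?thesis using bK[of k] 3 k r_le unfolding m_def by auto
    qed
  qed
  have xxK: "xx i \<in> K" if i: "i < m" for i
  proof -
    have NMsum: "(\<Sum>j<m. (N*M) $$ (i,j) * xx j) = (\<Sum>k<m. N $$ (i,k) * y k)"
    proof -
      have "(\<Sum>j<m. (N*M) $$ (i,j) * xx j) = (\<Sum>j<m. \<Sum>k<m. N $$ (i,k) * M $$ (k,j) * xx j)"
        by (rule sum.cong) (use i N M mult_mat_entry[OF N M i] in \<open>auto simp: sum_distrib_right\<close>)
      also have "\<dots> = (\<Sum>k<m. \<Sum>j<m. N $$ (i,k) * M $$ (k,j) * xx j)" by (rule sum.swap)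
      also have "\<dots> = (\<Sum>k<m. N $$ (i,k) * y k)"
        unfolding y_def by (simp add: sum_distrib_left mult.assoc)
      finally show ?thesis .
    qed
    have idsum: "(\<Sum>j<m. (1\<^sub>m m) $$ (i,j) * xx j) = xx i"
    proof -
      have "(\<Sum>j<m. (1\<^sub>m m) $$ (i,j) * xx j) = (\<Sum>j<m. if j = i then xx i else 0)"
        by (rule sum.cong) (use i in auto)
      thus ?thesis using i by simp
    qed
    have "xx i = (\<Sum>k<m. N $$ (i,k) * y k) - (\<Sum>j<m. ((N*M) $$ (i,j) - (1\<^sub>m m) $$ (i,j)) * xx j)"
      using NMsum idsum by (simp add: left_diff_distrib sum_subtractf)
    also have "\<dots> \<in> K"
    proof (rule tideal_diff[OF tK])
      show "(\<Sum>k<m. N $$ (i,k) * y k) \<in> K"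
        by (rule tideal_sum[OF tK], rule tideal_multl[OF tK]) (use yK in auto)
      show "(\<Sum>j<m. ((N*M) $$ (i,j) - (1\<^sub>m m) $$ (i,j)) * xx j) \<in> K"
        by (rule tideal_sum[OF tK], rule tideal_multr[OF tK]) (use MN i JK in blast)
    qed
    finally show ?thesis .
  qed
  have aK: "a i \<in> K" if i: "i \<in> {1..n}" for i
  proof (cases "i \<le> r")
    case True
    thus ?thesis using xxK[of i] i unfolding m_def xx_def by auto
  next
    case False thus ?thesis using aK_high i by auto
  qed
  have IK: "I \<subseteq> K" unfolding I_def by (rule gen_min[OF tK]) (use aK in auto)
  have bI: "b j \<in> I" for j
    unfolding b_def by (rule tideal_sum[OF tI], rule tideal_multr[OF tI], rule aI)
  have KI: "K \<subseteq> I" unfolding K_def by (rule gen_min[OF tI]) (use bI in auto)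
  have "I = gen_ideal (b ` {1..n})" using IK KI K_def by auto
  thus ?thesis using \<alpha>c detu unfolding b_def by blast
qed

end
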